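(* There is a function $C_1(t,\epsilon)$ such that the following holds for every positive integer $t$ and every $\epsilon\in(0,1)$: if $G$ is a bipartite graph with parts $A,B$ which is $\overline{K_{t,t}}$-free and satisfies $|B|\geq \epsilon^{-1}t$, then $A$ contains at most $C_1(t,\epsilon)$ vertices of degree at most $(1-\epsilon)|B|$.
   Context: A bipartite graph with parts $A,B$ is called $\overline{K_{t,t}}$-free if for every $t$-set $A_0\subseteq A$ and every $t$-set $B_0\subseteq B$ there is at least one edge between $A_0$ and $B_0$ (equivalently, the bipartite complement contains no $K_{t,t}$). *)

theory Defs
  imports Complex_Main
begin

definition coKtt_free :: "nat \<Rightarrow> 'v set \<Rightarrow> 'v set \<Rightarrow> ('v \<Rightarrow> 'v \<Rightarrow> bool) \<Rightarrow> bool" where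
  "coKtt_free t A B E \<longleftrightarrow>
     (\<forall>A0 B0. A0 \<subseteq> A \<longrightarrow> B0 \<subseteq> B \<longrightarrow> card A0 = t \<longrightarrow> card B0 = t \<longrightarrow>
        (\<exists>a\<in>A0. \<exists>b\<in>B0. E a b))"

definition bdeg :: "'v set \<Rightarrow> ('v \<Rightarrow> 'v \<Rightarrow> bool) \<Rightarrow> 'v \<Rightarrow> nat" where
  "bdeg B E a = card {b\<in>B. E a b}"

end

theory Submission
  imports Defs
begin

lemma avg_exists:
  fixes f :: "'a \<Rightarrow> real"
  assumes "finite X" "X \<noteq> {}" "sum f X \<ge> c"
  shows "\<exists>x\<in>X. f x * real (card X) \<ge> c"
proof (rule ccontr)
  assume "\<not> ?thesis"
  hence "\<forall>x\<in>X. f x < c / real (card X)"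
    using assms by (auto simp: field_simps card_gt_0_iff not_le)
  hence "sum f X < sum (\<lambda>_. c / real (card X)) X"
    using assms by (intro sum_strict_mono) auto
  also have "\<dots> = c" using assms by simp
  finally show False using assms by simp
qed

lemma swap_count:
  assumes "finite S" "finite B"
  shows "(\<Sum>b\<in>B. real (card {a\<in>S. P a b})) = (\<Sum>a\<in>S. real (card {b\<in>B. P a b}))"
proof -
  have "(\<Sum>b\<in>B. real (card {a\<in>S. P a b})) = (\<Sum>b\<in>B. \<Sum>a\<in>S. if P a b then 1 else (0::real))"
    using assms by (simp add: sum.If_cases Collect_conj_eq Int_commute)
  also have "\<dots> = (\<Sum>a\<in>S. \<Sum>b\<in>B. if P a b then 1 else (0::real))" by (rule sum.swap)
  also have "\<dots> = (\<Sum>a\<in>S. real (card {b\<in>B. P a b}))"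
    using assms by (simp add: sum.If_cases Collect_conj_eq Int_commute)
  finally show ?thesis .
qed

lemma grow:
  fixes S B :: "nat set" and m r :: real
  assumes fS: "finite S" and fB: "finite B"
    and nb: "\<forall>a\<in>S. real (card {b\<in>B. \<not> E a b}) \<ge> m"
    and mt: "m \<ge> real t" and Bm: "real (card B) \<ge> m" and rpos: "r > 0"
    and hr: "\<forall>j<t. real (card B) - real j \<le> r * (m - real j)"
  shows "j \<le> t \<Longrightarrow> \<exists>B0 S0. B0 \<subseteq> B \<and> card B0 = j \<and> S0 \<subseteq> S \<and> (\<forall>a\<in>S0. \<forall>b\<in>B0. \<not> E a b)
            \<and> real (card S) \<le> r ^ j * real (card S0)"
proof (induction j)
  case 0
  show ?case by (rule exI[of _ "{}"], rule exI[of _ S]) auto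
next
  case (Suc j)
  then obtain B0 S0 where B0: "B0 \<subseteq> B" "card B0 = j" and S0: "S0 \<subseteq> S"
    and ne: "\<forall>a\<in>S0. \<forall>b\<in>B0. \<not> E a b" and cS: "real (card S) \<le> r ^ j * real (card S0)"
    by auto
  have jt: "j < t" using Suc by simp
  define B' where "B' = B - B0"
  have fB0: "finite B0" using B0 fB finite_subset by blast
  have cB': "card B' = card B - j" unfolding B'_def using B0 fB0 by (simp add: card_Diff_subset)
  have Bj: "card B > j" using Bm mt jt by linarith
  hence B'ne: "B' \<noteq> {}" using cB' by auto
  have fB': "finite B'" using fB B'_def by simp
  have fS0: "finite S0" using S0 fS finite_subset by blast
  have each: "real (card {b\<in>B'. \<not> E a b}) \<ge> m - real j" if a: "a \<in> S0" for a
  proof -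
    have sub: "B0 \<subseteq> {b\<in>B. \<not> E a b}" using ne a B0 by auto
    have "{b\<in>B'. \<not> E a b} = {b\<in>B. \<not> E a b} - B0" unfolding B'_def by auto
    hence "card {b\<in>B'. \<not> E a b} = card {b\<in>B. \<not> E a b} - j"
      using sub fB0 B0 by (simp add: card_Diff_subset)
    moreover have "card {b\<in>B. \<not> E a b} \<ge> j"
      using sub B0 fB by (metis (no_types, lifting) card_mono finite_subset mem_Collect_eq subsetI)
    moreover have "real (card {b\<in>B. \<not> E a b}) \<ge> m" using nb a S0 by auto
    ultimately show ?thesis by simp
  qed
  have "(\<Sum>a\<in>S0. real (card {b\<in>B'. \<not> E a b})) \<ge> (\<Sum>a\<in>S0. m - real j)"
    using each by (intro sum_mono) auto
  hence "(\<Sum>b\<in>B'. real (card {a\<in>S0. \<not> E a b})) \<ge> real (card S0) * (m - real j)"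
    using swap_count[OF fS0 fB', of "\<lambda>a b. \<not> E a b"] by simp
  then obtain b where b: "b \<in> B'"
    and bb: "real (card {a\<in>S0. \<not> E a b}) * real (card B') \<ge> real (card S0) * (m - real j)"
    using avg_exists[OF fB' B'ne] by blast
  define S1 where "S1 = {a\<in>S0. \<not> E a b}"
  have cBr: "real (card B') = real (card B) - real j" using cB' Bj by simp
  have pos: "real (card B) - real j > 0" using Bj by simp
  have "real (card S0) * (real (card B) - real j) \<le> real (card S0) * (r * (m - real j))"
    using hr jt by (intro mult_left_mono) auto
  also have "\<dots> = r * (real (card S0) * (m - real j))" by simp
  also have "\<dots> \<le> r * (real (card S1) * (real (card B) - real j))"
    using bb cBr rpos S1_def by (intro mult_left_mono) auto
  finally have "real (card S0) * (real (card B) - real j) \<le> (r * real (card S1)) * (real (card B) - real j)"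
    by simp
  hence c01: "real (card S0) \<le> r * real (card S1)" using pos by simp
  have "real (card S) \<le> r ^ j * (r * real (card S1))"
    using cS c01 rpos by (meson dual_order.trans mult_left_mono zero_le_power less_imp_le)
  hence "real (card S) \<le> r ^ Suc j * real (card S1)" by (simp add: ac_simps)
  moreover have "insert b B0 \<subseteq> B" using b B0 B'_def by auto
  moreover have "card (insert b B0) = Suc j" using b B'_def fB0 B0 by auto
  moreover have "S1 \<subseteq> S" using S1_def S0 by auto
  moreover have "\<forall>a\<in>S1. \<forall>c\<in>insert b B0. \<not> E a c" using S1_def ne by auto
  ultimately show ?case by blast
qed

theorem mainTheorem3:
  shows "\<exists>C1 :: nat \<Rightarrow> real \<Rightarrow> real. \<forall>(t::nat) (\<epsilon>::real) (A::nat set) (B::nat set) (E::nat \<Rightarrow> nat \<Rightarrow> bool).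
     t > 0 \<longrightarrow> 0 < \<epsilon> \<longrightarrow> \<epsilon> < 1 \<longrightarrow>
     finite A \<longrightarrow> finite B \<longrightarrow> A \<inter> B = {} \<longrightarrow>
     coKtt_free t A B E \<longrightarrow> real (card B) \<ge> t / \<epsilon> \<longrightarrow>
     real (card {a\<in>A. real (bdeg B E a) \<le> (1 - \<epsilon>) * real (card B)}) \<le> C1 t \<epsilon>"
proof (rule exI[of _ "\<lambda>t \<epsilon>. (real t / \<epsilon>) ^ t * real t"], intro allI impI)
  fix t :: nat and \<epsilon> :: real and A B :: "nat set" and E :: "nat \<Rightarrow> nat \<Rightarrow> bool"
  assume t0: "t > 0" and e0: "0 < \<epsilon>" and e1: "\<epsilon> < 1" and fA: "finite A" and fB: "finite B"
    and "A \<inter> B = {}" and free: "coKtt_free t A B E" and Bt: "real t / \<epsilon> \<le> real (card B)"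
  define S where "S = {a\<in>A. real (bdeg B E a) \<le> (1 - \<epsilon>) * real (card B)}"
  define d where "d = real (card B)"
  define m where "m = \<epsilon> * d"
  define r where "r = real t / \<epsilon>"
  have fS: "finite S" using fA S_def by simp
  have mt: "m \<ge> real t" using Bt e0 unfolding m_def d_def by (simp add: field_simps)
  have Bm: "d \<ge> m" using e0 e1 unfolding m_def d_def using mult_right_mono[of \<epsilon> 1 "real (card B)"] by simp
  have rpos: "r > 0" using t0 e0 r_def by simp
  have nb: "\<forall>a\<in>S. real (card {b\<in>B. \<not> E a b}) \<ge> m"
  proof
    fix a assume "a \<in> S"
    hence le: "real (bdeg B E a) \<le> (1 - \<epsilon>) * d" using S_def d_def by simp
    have "{b\<in>B. \<not> E a b} = B - {b\<in>B. E a b}" by auto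
    hence "card {b\<in>B. \<not> E a b} = card B - card {b\<in>B. E a b}"
      using fB by (simp add: card_Diff_subset)
    moreover have "card {b\<in>B. E a b} \<le> card B" using fB by (intro card_mono) auto
    ultimately have "real (card {b\<in>B. \<not> E a b}) = d - real (bdeg B E a)"
      unfolding bdeg_def d_def by simp
    thus "real (card {b\<in>B. \<not> E a b}) \<ge> m" using le m_def by (simp add: algebra_simps)
  qed
  have hr: "\<forall>j<t. real (card B) - real j \<le> r * (m - real j)"
  proof (intro allI impI)
    fix j assume jt: "j < t"
    have "m - real j \<ge> m / real t"
    proof -
      have "m * (real t - 1) \<ge> real t * (real t - 1)" using mt jt by (intro mult_right_mono) auto
      hence "m * real t - m \<ge> real t * (real j)"
      proof -
        have "real j \<le> real t - 1" using jt by linarith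
        hence "real t * real j \<le> real t * (real t - 1)" by (intro mult_left_mono) auto
        thus ?thesis using \<open>m * (real t - 1) \<ge> real t * (real t - 1)\<close> by (simp add: algebra_simps)
      qed
      hence "(m - real j) * real t \<ge> m" by (simp add: algebra_simps)
      thus ?thesis using t0 by (simp add: field_simps)
    qed
    hence "r * (m - real j) \<ge> r * (m / real t)" using rpos by (intro mult_left_mono) auto
    also have "r * (m / real t) = d" using t0 e0 unfolding r_def m_def by simp
    finally show "real (card B) - real j \<le> r * (m - real j)" using d_def by simp
  qed
  obtain B0 S0 where B0: "B0 \<subseteq> B" "card B0 = t" and S0: "S0 \<subseteq> S"
    and ne: "\<forall>a\<in>S0. \<forall>b\<in>B0. \<not> E a b" and cS: "real (card S) \<le> r ^ t * real (card S0)"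
    using grow[OF fS fB nb mt Bm[unfolded d_def] rpos hr, of t] by auto
  have "card S0 < t"
  proof (rule ccontr)
    assume "\<not> card S0 < t"
    then obtain A0 where "A0 \<subseteq> S0" "card A0 = t" by (meson not_less obtain_subset_with_card_n)
    have "S0 \<subseteq> A" using S0 S_def by auto
    hence "A0 \<subseteq> A" using \<open>A0 \<subseteq> S0\<close> by (rule subset_trans[rotated])
    hence "\<exists>a\<in>A0. \<exists>b\<in>B0. E a b"
      using free B0 \<open>card A0 = t\<close> unfolding coKtt_free_def by (elim allE[of _ A0] allE[of _ B0]) simp
    thus False using ne \<open>A0 \<subseteq> S0\<close> by blast
  qed
  hence "real (card S0) \<le> real t" by simp
  hence "r ^ t * real (card S0) \<le> r ^ t * real t" using rpos by (intro mult_left_mono) auto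
  hence "real (card S) \<le> r ^ t * real t" using cS by linarith
  thus "real (card {a\<in>A. real (bdeg B E a) \<le> (1 - \<epsilon>) * real (card B)}) \<le> (real t / \<epsilon>) ^ t * real t"
    using S_def r_def by simp
qed

end
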